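(* Let $(\Omega,\mu)$ be a $\sigma$-finite measure space, $p_0\ge 1$, and let $f,g$ be measurable functions on $\Omega$ such that there exists $\tau_0\in(0,\infty)$ with $\lambda_f(\tau)\le\lambda_g(\tau)$ for $\tau<\tau_0$ and $\lambda_f(\tau)\ge\lambda_g(\tau)$ for $\tau>\tau_0$. Suppose $f\in L^{p_0}(\Omega)$ and $\|f\|_{p_0}\ge\|g\|_{p_0}$. Then for all $t>0$, \[ \int_0^t g^*(s)^{p_0}\,ds\le\int_0^t f^*(s)^{p_0}\,ds . \]
   Context: For a measurable $f$ on $(\Omega,\mu)$: the distribution function is $\lambda_f(\tau)=\mu\{x:|f(x)|>\tau\}$, $\tau>0$, and the nonincreasing rearrangement is $f^*(s)=\inf\{\tau>0:\lambda_f(\tau)\le s\}$, $s>0$. *)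

theory Defs
  imports "HOL-Analysis.Analysis"
begin

definition distrib_fun :: "'a measure \<Rightarrow> ('a \<Rightarrow> real) \<Rightarrow> real \<Rightarrow> ennreal" where
  "distrib_fun M f \<tau> = emeasure M {x \<in> space M. \<bar>f x\<bar> > \<tau>}"

text \<open>Nonincreasing rearrangement: f*(s) = inf {tau > 0. lambda_f(tau) <= s},
  valued in [0, infinity] (the infimum of the empty set is infinity).\<close>
definition rearrangement :: "'a measure \<Rightarrow> ('a \<Rightarrow> real) \<Rightarrow> real \<Rightarrow> ennreal" where
  "rearrangement M f s = Inf (ennreal ` {\<tau>. \<tau> > 0 \<and> distrib_fun M f \<tau> \<le> ennreal s})"

definition epowr :: "ennreal \<Rightarrow> real \<Rightarrow> ennreal" where
  "epowr x p = (if x = \<infinity> then \<infinity> else ennreal (enn2real x powr p))"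

definition Lp_norm :: "'a measure \<Rightarrow> real \<Rightarrow> ('a \<Rightarrow> real) \<Rightarrow> ennreal" where
  "Lp_norm M p f = epowr (\<integral>\<^sup>+ x. ennreal (\<bar>f x\<bar> powr p) \<partial>M) (1 / p)"

definition in_Lp :: "'a measure \<Rightarrow> real \<Rightarrow> ('a \<Rightarrow> real) \<Rightarrow> bool" where
  "in_Lp M p f \<longleftrightarrow> f \<in> borel_measurable M \<and> integrable M (\<lambda>x. \<bar>f x\<bar> powr p)"

end

theory Submission
  imports Defs
begin


lemma powr_has_integral:
  fixes p r :: real assumes p: "p \<ge> 1" and r: "r \<ge> 0"
  shows "((\<lambda>x. p * x powr (p-1)) has_integral r powr p) {0..r}"
proof -
  have "((\<lambda>x. p * x powr (p-1)) has_integral ((\<lambda>x. x powr p) r - (\<lambda>x. x powr p) 0)) {0..r}"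
  proof (rule fundamental_theorem_of_calculus_interior)
    show "0 \<le> r" by fact
    show "continuous_on {0..r} (\<lambda>x. x powr p)"
      using p by (intro continuous_on_powr') (auto intro: continuous_intros)
    fix x assume x: "x \<in> {0<..<r}"
    show "((\<lambda>x. x powr p) has_vector_derivative p * x powr (p - 1)) (at x)"
      using x unfolding has_real_derivative_iff_has_vector_derivative[symmetric]
      by (auto intro!: derivative_eq_intros)
  qed
  then show ?thesis using p by simp
qed

lemma pow_int:
  fixes p :: real assumes p: "p \<ge> 1"
  shows "(\<integral>\<^sup>+\<tau>. ennreal (p * \<tau> powr (p-1)) * indicator {0<..} \<tau> * indicator {\<tau>. ennreal \<tau> < u} \<tau> \<partial>lborel) = epowr u p"
proof (cases "u = \<infinity>")
  case False
  define r where "r = enn2real u"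
  have u: "u = ennreal r" "r \<ge> 0" using False by (auto simp: r_def less_top[symmetric])
  have "(\<integral>\<^sup>+\<tau>. ennreal (p * \<tau> powr (p-1)) * indicator {0<..} \<tau> * indicator {\<tau>. ennreal \<tau> < u} \<tau> \<partial>lborel)
     = (\<integral>\<^sup>+\<tau>. ennreal (indicator {0..r} \<tau> * (p * \<tau> powr (p-1))) \<partial>lborel)"
  proof (rule nn_integral_cong_AE)
    show "AE \<tau> in lborel. ennreal (p * \<tau> powr (p-1)) * indicator {0<..} \<tau> * indicator {\<tau>. ennreal \<tau> < u} \<tau>
       = ennreal (indicator {0..r} \<tau> * (p * \<tau> powr (p-1)))"
      using AE_lborel_singleton[of 0] AE_lborel_singleton[of r]
    proof eventually_elim
      case (elim \<tau>)
      then show ?case using u p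
        by (auto simp: indicator_def ennreal_less_iff)
    qed
  qed
  also have "\<dots> = ennreal (r powr p)"
    using nn_integral_has_integral_lebesgue[OF _ powr_has_integral[OF p u(2)]] p by auto
  finally show ?thesis using u False by (simp add: epowr_def)
next
  case True
  let ?I = "(\<integral>\<^sup>+\<tau>. ennreal (p * \<tau> powr (p-1)) * indicator {0<..} \<tau> * indicator {\<tau>. ennreal \<tau> < u} \<tau> \<partial>lborel)"
  have "of_nat n \<le> ?I" for n
  proof -
    have "of_nat n \<le> ennreal (real n powr p)"
    proof (cases "n = 0")
      case False
      then have "real n \<le> real n powr p" using p
        using powr_mono[of 1 p "real n"] by simp
      then show ?thesis by (simp add: ennreal_of_nat_eq_real_of_nat)
    qed simp
    also have "ennreal (real n powr p) = (\<integral>\<^sup>+\<tau>. ennreal (indicator {0..real n} \<tau> * (p * \<tau> powr (p-1))) \<partial>lborel)"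
      using nn_integral_has_integral_lebesgue[OF _ powr_has_integral[OF p, of "real n"]] p by auto
    also have "\<dots> \<le> ?I"
    proof (rule nn_integral_mono_AE)
      show "AE \<tau> in lborel. ennreal (indicator {0..real n} \<tau> * (p * \<tau> powr (p-1))) \<le> ennreal (p * \<tau> powr (p-1)) * indicator {0<..} \<tau> * indicator {\<tau>. ennreal \<tau> < u} \<tau>"
        using AE_lborel_singleton[of 0]
      proof eventually_elim
        case (elim \<tau>)
        then show ?case using True p by (auto simp: indicator_def)
      qed
    qed
    finally show ?thesis .
  qed
  then have "?I = \<infinity>"
    using ennreal_SUP_eq_top[of UNIV "\<lambda>_. ?I"] by auto
  then show ?thesis using True by (simp add: epowr_def)
qed


lemma downset_borel:
  fixes S :: "real set"
  assumes down: "\<And>x y. x \<in> S \<Longrightarrow> y \<le> x \<Longrightarrow> y \<in> S"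
  shows "S \<in> sets borel"
proof (cases "S = {}")
  case False
  show ?thesis
  proof (cases "bdd_above S")
    case True
    note bdd = True
    define c where "c = Sup S"
    have "S = {..<c} \<union> (S \<inter> {c})"
    proof (intro equalityI subsetI)
      fix x assume "x \<in> S"
      then have "x \<le> c" using True by (simp add: c_def cSup_upper)
      then show "x \<in> {..<c} \<union> (S \<inter> {c})" using \<open>x \<in> S\<close> by auto
    next
      fix x assume x: "x \<in> {..<c} \<union> (S \<inter> {c})"
      show "x \<in> S"
      proof (cases "x < c")
        case True
        then obtain y where "y \<in> S" "x < y" unfolding c_def using less_cSup_iff[OF False bdd, of x] by auto
        then show ?thesis using down by auto
      qed (use x in auto)
    qed
    also have "\<dots> \<in> sets borel"
      by (intro sets.Un) (auto intro: borel_closed finite_imp_closed)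
    finally show ?thesis .
  next
    case False
    have "x \<in> S" for x
    proof -
      from False obtain y where "y \<in> S" "x < y" unfolding bdd_above_def by (meson not_le)
      then show "x \<in> S" using down by auto
    qed
    then have "S = UNIV" by auto
    then show ?thesis by simp
  qed
qed simp

lemma antimono_borel:
  fixes h :: "real \<Rightarrow> ennreal"
  assumes "\<And>x y. x \<le> y \<Longrightarrow> h y \<le> h x"
  shows "h \<in> borel_measurable borel"
proof (rule borel_measurableI_greater)
  fix a
  have "{x. a < h x} \<in> sets borel"
    by (rule downset_borel) (use assms in \<open>auto intro: less_le_trans\<close>)
  then show "{x \<in> space borel. a < h x} \<in> sets borel" by simp
qed

lemma dist_antimono:
  assumes "f \<in> borel_measurable M" "\<sigma> \<le> \<tau>"
  shows "distrib_fun M f \<tau> \<le> distrib_fun M f \<sigma>"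
  unfolding distrib_fun_def using assms by (intro emeasure_mono) auto

lemma dist_meas:
  assumes "f \<in> borel_measurable M"
  shows "distrib_fun M f \<in> borel_measurable borel"
  using dist_antimono[OF assms] by (intro antimono_borel) auto

lemma dist_rcont:
  assumes [measurable]: "f \<in> borel_measurable M"
  shows "distrib_fun M f \<tau> = (SUP n. distrib_fun M f (\<tau> + 1 / Suc n))"
proof -
  let ?A = "\<lambda>n. {x \<in> space M. \<bar>f x\<bar> > \<tau> + 1 / Suc n}"
  have inc: "incseq ?A"
  proof (rule incseq_SucI, safe)
    fix n x assume "x \<in> space M" "\<tau> + 1 / Suc n < \<bar>f x\<bar>"
    moreover have "1 / real (Suc (Suc n)) \<le> 1 / Suc n" by (simp add: frac_le)
    ultimately show "\<tau> + 1 / Suc (Suc n) < \<bar>f x\<bar>" by linarith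
  qed
  have un: "(\<Union>n. ?A n) = {x \<in> space M. \<bar>f x\<bar> > \<tau>}"
  proof (intro equalityI subsetI)
    fix x assume "x \<in> (\<Union>n. ?A n)"
    then show "x \<in> {x \<in> space M. \<bar>f x\<bar> > \<tau>}"
      by auto (smt (verit) of_nat_0_le_iff divide_nonneg_nonneg)
  next
    fix x assume x: "x \<in> {x \<in> space M. \<bar>f x\<bar> > \<tau>}"
    then have "0 < \<bar>f x\<bar> - \<tau>" by auto
    then obtain n where "1 / Suc n < \<bar>f x\<bar> - \<tau>" using nat_approx_posE by blast
    then show "x \<in> (\<Union>n. ?A n)" using x by (auto intro!: exI[of _ n])
  qed
  have "(SUP n. emeasure M (?A n)) = emeasure M (\<Union>n. ?A n)"
    by (rule SUP_emeasure_incseq[OF _ inc]) auto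
  then show ?thesis unfolding distrib_fun_def un by simp
qed

lemma rearr_iff:
  assumes [measurable]: "f \<in> borel_measurable M" and s: "s > 0" and \<tau>: "\<tau> > 0"
  shows "ennreal \<tau> < rearrangement M f s \<longleftrightarrow> ennreal s < distrib_fun M f \<tau>"
proof
  assume "ennreal \<tau> < rearrangement M f s"
  then show "ennreal s < distrib_fun M f \<tau>"
    unfolding rearrangement_def using \<tau> by (metis (mono_tags, lifting) Inf_lower image_eqI mem_Collect_eq not_le)
next
  assume "ennreal s < distrib_fun M f \<tau>"
  then obtain n where n: "ennreal s < distrib_fun M f (\<tau> + 1 / Suc n)"
    unfolding dist_rcont[OF assms(1), of \<tau>] by (auto simp: less_SUP_iff)
  have "ennreal (\<tau> + 1 / Suc n) \<le> rearrangement M f s"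
    unfolding rearrangement_def
  proof (rule Inf_greatest)
    fix y assume "y \<in> ennreal ` {\<tau>. 0 < \<tau> \<and> distrib_fun M f \<tau> \<le> ennreal s}"
    then obtain \<sigma> where "y = ennreal \<sigma>" "0 < \<sigma>" "distrib_fun M f \<sigma> \<le> ennreal s" by auto
    then have "\<not> \<sigma> \<le> \<tau> + 1 / Suc n"
      using n dist_antimono[OF assms(1), of \<sigma> "\<tau> + 1 / Suc n"] by auto
    then show "ennreal (\<tau> + 1 / Suc n) \<le> y" using \<open>y = ennreal \<sigma>\<close> by (auto intro!: ennreal_leI)
  qed
  moreover have "ennreal \<tau> < ennreal (\<tau> + 1 / Suc n)"
    using \<tau> by (subst ennreal_less_iff) auto
  ultimately show "ennreal \<tau> < rearrangement M f s" by order
qed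

lemma rearr_antimono:
  "s \<le> s' \<Longrightarrow> rearrangement M f s' \<le> rearrangement M f s"
  unfolding rearrangement_def
  by (intro Inf_superset_mono image_mono) (auto intro: order_trans ennreal_leI)



lemma min_ineq: fixes x y t :: ennreal assumes "x \<le> y" shows "min t y + x \<le> y + min t x"
proof (cases "y \<le> t")
  case True
  then have "min t y = y" "min t x = x" using assms by (auto simp: min_def)
  then show ?thesis by (simp add: add.commute)
next
  case False
  then have ty: "t \<le> y" by simp
  have "t + x \<le> y + min t x"
  proof (cases "x \<le> t")
    case True
    then show ?thesis using ty by (simp add: min_def add_right_mono)
  next
    case False
    then have "min t x = t" by (intro min.absorb1) (simp add: not_le less_imp_le)
    then show ?thesis using assms by (simp add: add.commute add_left_mono)
  qed
  moreover have "min t y = t" using False by (intro min.absorb1) (simp add: not_le less_imp_le)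
  ultimately show ?thesis by simp
qed

lemma final_cmp:
  fixes W lf lg :: "real \<Rightarrow> ennreal" and t :: ennreal and \<tau>0 :: real
  assumes [measurable]: "W \<in> borel_measurable borel" "lf \<in> borel_measurable borel" "lg \<in> borel_measurable borel"
    and anti: "\<And>\<sigma> \<tau>. 0 < \<sigma> \<Longrightarrow> \<sigma> \<le> \<tau> \<Longrightarrow> lf \<tau> \<le> lf \<sigma>"
    and low: "\<And>\<tau>. 0 < \<tau> \<Longrightarrow> \<tau> < \<tau>0 \<Longrightarrow> lf \<tau> \<le> lg \<tau>"
    and high: "\<And>\<tau>. \<tau> > \<tau>0 \<Longrightarrow> lg \<tau> \<le> lf \<tau>"
    and W0: "\<And>\<tau>. \<tau> \<le> 0 \<Longrightarrow> W \<tau> = 0"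
    and t0: "\<tau>0 > 0"
    and N: "(\<integral>\<^sup>+\<tau>. W \<tau> * lg \<tau> \<partial>lborel) \<le> (\<integral>\<^sup>+\<tau>. W \<tau> * lf \<tau> \<partial>lborel)"
    and Nf: "(\<integral>\<^sup>+\<tau>. W \<tau> * lf \<tau> \<partial>lborel) < \<infinity>"
  shows "(\<integral>\<^sup>+\<tau>. W \<tau> * min t (lg \<tau>) \<partial>lborel) \<le> (\<integral>\<^sup>+\<tau>. W \<tau> * min t (lf \<tau>) \<partial>lborel)"
proof (cases "\<exists>\<tau>1>\<tau>0. lf \<tau>1 > t")
  case True
  then obtain \<tau>1 where \<tau>1: "\<tau>1 > \<tau>0" "lf \<tau>1 > t" by auto
  show ?thesis
  proof (rule nn_integral_mono)
    fix \<tau> :: real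
    show "W \<tau> * min t (lg \<tau>) \<le> W \<tau> * min t (lf \<tau>)"
    proof (cases "\<tau> \<le> 0")
      case False
      show ?thesis
      proof (cases "\<tau> > \<tau>0")
        case True then show ?thesis using high[OF True] by (intro mult_left_mono min.mono) auto
      next
        case nt: False
        then have "lf \<tau>1 \<le> lf \<tau>" using anti[of \<tau> \<tau>1] False \<tau>1 by auto
        then have "t < lf \<tau>" using \<tau>1 by order
        then show ?thesis by (intro mult_left_mono) auto
      qed
    qed (simp add: W0)
  qed
next
  case False
  have Hle: "lf \<tau> \<le> t" if "\<tau> > \<tau>0" for \<tau> using False that by (meson not_le)
  let ?L = "indicator {..<\<tau>0} :: real \<Rightarrow> ennreal" and ?H = "indicator {\<tau>0<..} :: real \<Rightarrow> ennreal"
  have split: "(\<integral>\<^sup>+\<tau>. W \<tau> * X \<tau> \<partial>lborel) = (\<integral>\<^sup>+\<tau>. W \<tau> * X \<tau> * ?L \<tau> \<partial>lborel) + (\<integral>\<^sup>+\<tau>. W \<tau> * X \<tau> * ?H \<tau> \<partial>lborel)"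
    if [measurable]: "X \<in> borel_measurable borel" for X
  proof -
    have "(\<integral>\<^sup>+\<tau>. W \<tau> * X \<tau> \<partial>lborel) = (\<integral>\<^sup>+\<tau>. W \<tau> * X \<tau> * ?L \<tau> + W \<tau> * X \<tau> * ?H \<tau> \<partial>lborel)"
    proof (rule nn_integral_cong_AE)
      show "AE \<tau> in lborel. W \<tau> * X \<tau> = W \<tau> * X \<tau> * ?L \<tau> + W \<tau> * X \<tau> * ?H \<tau>"
        using AE_lborel_singleton[of \<tau>0] by eventually_elim (auto simp: indicator_def)
    qed
    also have "\<dots> = (\<integral>\<^sup>+\<tau>. W \<tau> * X \<tau> * ?L \<tau> \<partial>lborel) + (\<integral>\<^sup>+\<tau>. W \<tau> * X \<tau> * ?H \<tau> \<partial>lborel)"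
      by (rule nn_integral_add) auto
    finally show ?thesis .
  qed
  define af where "af = (\<integral>\<^sup>+\<tau>. W \<tau> * lf \<tau> * ?L \<tau> \<partial>lborel)"
  define bf where "bf = (\<integral>\<^sup>+\<tau>. W \<tau> * lf \<tau> * ?H \<tau> \<partial>lborel)"
  define ag where "ag = (\<integral>\<^sup>+\<tau>. W \<tau> * lg \<tau> * ?L \<tau> \<partial>lborel)"
  define bg where "bg = (\<integral>\<^sup>+\<tau>. W \<tau> * lg \<tau> * ?H \<tau> \<partial>lborel)"
  define Af where "Af = (\<integral>\<^sup>+\<tau>. W \<tau> * min t (lf \<tau>) * ?L \<tau> \<partial>lborel)"
  define Bf where "Bf = (\<integral>\<^sup>+\<tau>. W \<tau> * min t (lf \<tau>) * ?H \<tau> \<partial>lborel)"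
  define Ag where "Ag = (\<integral>\<^sup>+\<tau>. W \<tau> * min t (lg \<tau>) * ?L \<tau> \<partial>lborel)"
  define Bg where "Bg = (\<integral>\<^sup>+\<tau>. W \<tau> * min t (lg \<tau>) * ?H \<tau> \<partial>lborel)"
  have e1: "(\<integral>\<^sup>+\<tau>. W \<tau> * lf \<tau> \<partial>lborel) = af + bf" unfolding af_def bf_def by (rule split) simp
  have e2: "(\<integral>\<^sup>+\<tau>. W \<tau> * lg \<tau> \<partial>lborel) = ag + bg" unfolding ag_def bg_def by (rule split) simp
  have e3: "(\<integral>\<^sup>+\<tau>. W \<tau> * min t (lf \<tau>) \<partial>lborel) = Af + Bf" unfolding Af_def Bf_def by (rule split) simp
  have e4: "(\<integral>\<^sup>+\<tau>. W \<tau> * min t (lg \<tau>) \<partial>lborel) = Ag + Bg" unfolding Ag_def Bg_def by (rule split) simp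
  have "Bf = bf" unfolding Bf_def bf_def
    by (rule nn_integral_cong) (auto simp: indicator_def Hle min.absorb2)
  have glt: "lg \<tau> \<le> t" if "\<tau> > \<tau>0" for \<tau> using order.trans[OF high[OF that] Hle[OF that]] .
  have "Bg = bg" unfolding Bg_def bg_def
    by (rule nn_integral_cong) (auto simp: indicator_def min.absorb2 glt)
  have "Ag + af = (\<integral>\<^sup>+\<tau>. W \<tau> * min t (lg \<tau>) * ?L \<tau> + W \<tau> * lf \<tau> * ?L \<tau> \<partial>lborel)"
    unfolding Ag_def af_def by (rule nn_integral_add[symmetric]) auto
  also have "\<dots> \<le> (\<integral>\<^sup>+\<tau>. W \<tau> * lg \<tau> * ?L \<tau> + W \<tau> * min t (lf \<tau>) * ?L \<tau> \<partial>lborel)"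
  proof (rule nn_integral_mono)
    fix \<tau> :: real
    show "W \<tau> * min t (lg \<tau>) * ?L \<tau> + W \<tau> * lf \<tau> * ?L \<tau> \<le> W \<tau> * lg \<tau> * ?L \<tau> + W \<tau> * min t (lf \<tau>) * ?L \<tau>"
    proof (cases "0 < \<tau> \<and> \<tau> < \<tau>0")
      case True
      have "W \<tau> * (min t (lg \<tau>) + lf \<tau>) \<le> W \<tau> * (lg \<tau> + min t (lf \<tau>))"
        using min_ineq[OF low[of \<tau>]] True by (intro mult_left_mono) auto
      then show ?thesis using True by (simp add: indicator_def distrib_left)
    next
      case False
      then show ?thesis by (cases "\<tau> \<le> 0") (auto simp: W0 indicator_def)
    qed
  qed
  also have "\<dots> = ag + Af"
    unfolding Af_def ag_def by (rule nn_integral_add) auto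
  finally have key: "Ag + af \<le> ag + Af" .
  have "af + (Ag + Bg) = (Ag + af) + bg" using \<open>Bg = bg\<close> by (simp add: ac_simps)
  also have "\<dots> \<le> (ag + Af) + bg" using key by (intro add_right_mono)
  also have "\<dots> = (ag + bg) + Af" by (simp add: ac_simps)
  also have "\<dots> \<le> (af + bf) + Af" using N e1 e2 by (intro add_right_mono) simp
  also have "\<dots> = af + (Af + Bf)" using \<open>Bf = bf\<close> by (simp add: ac_simps)
  finally have "af + (Ag + Bg) \<le> af + (Af + Bf)" .
  moreover have "af \<noteq> \<infinity>"
  proof -
    have "af \<le> af + bf" by simp
    then show ?thesis using Nf e1 by (auto simp: top_unique)
  qed
  ultimately have "Ag + Bg \<le> Af + Bf" by (simp add: ennreal_add_left_cancel_le)
  then show ?thesis using e3 e4 by simp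
qed



lemma layer_cake:
  fixes h :: "'a \<Rightarrow> ennreal" and p :: real
  assumes sf: "sigma_finite_measure M" and p: "p \<ge> 1" and h[measurable]: "h \<in> borel_measurable M"
  shows "(\<integral>\<^sup>+x. epowr (h x) p \<partial>M) =
    (\<integral>\<^sup>+\<tau>. ennreal (p * \<tau> powr (p-1)) * indicator {0<..} \<tau> * emeasure M {x\<in>space M. ennreal \<tau> < h x} \<partial>lborel)"
proof -
  interpret pair_sigma_finite M lborel
    unfolding pair_sigma_finite_def using sf lborel.sigma_finite_measure_axioms by auto
  have meas: "(\<lambda>(x, \<tau>). ennreal (p * \<tau> powr (p-1)) * indicator {0<..} \<tau> * indicator {\<tau>. ennreal \<tau> < h x} \<tau>)
     \<in> borel_measurable (M \<Otimes>\<^sub>M lborel)"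
    unfolding indicator_def by measurable
  have "(\<integral>\<^sup>+x. epowr (h x) p \<partial>M) = (\<integral>\<^sup>+x. (\<integral>\<^sup>+\<tau>. ennreal (p * \<tau> powr (p-1)) * indicator {0<..} \<tau> * indicator {\<tau>. ennreal \<tau> < h x} \<tau> \<partial>lborel) \<partial>M)"
    by (simp add: pow_int[OF p])
  also have "\<dots> = (\<integral>\<^sup>+\<tau>. (\<integral>\<^sup>+x. ennreal (p * \<tau> powr (p-1)) * indicator {0<..} \<tau> * indicator {\<tau>. ennreal \<tau> < h x} \<tau> \<partial>M) \<partial>lborel)"
    using Fubini'[OF meas] by simp
  also have "\<dots> = (\<integral>\<^sup>+\<tau>. ennreal (p * \<tau> powr (p-1)) * indicator {0<..} \<tau> * emeasure M {x\<in>space M. ennreal \<tau> < h x} \<partial>lborel)"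
  proof (rule nn_integral_cong)
    fix \<tau> :: real
    have "(\<integral>\<^sup>+x. ennreal (p * \<tau> powr (p-1)) * indicator {0<..} \<tau> * indicator {\<tau>. ennreal \<tau> < h x} \<tau> \<partial>M)
      = (\<integral>\<^sup>+x. (ennreal (p * \<tau> powr (p-1)) * indicator {0<..} \<tau>) * indicator {x\<in>space M. ennreal \<tau> < h x} x \<partial>M)"
      by (rule nn_integral_cong) (auto simp: indicator_def)
    also have "\<dots> = ennreal (p * \<tau> powr (p-1)) * indicator {0<..} \<tau> * emeasure M {x\<in>space M. ennreal \<tau> < h x}"
      by (rule nn_integral_cmult_indicator) measurable
    finally show "(\<integral>\<^sup>+x. ennreal (p * \<tau> powr (p-1)) * indicator {0<..} \<tau> * indicator {\<tau>. ennreal \<tau> < h x} \<tau> \<partial>M)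
      = ennreal (p * \<tau> powr (p-1)) * indicator {0<..} \<tau> * emeasure M {x\<in>space M. ennreal \<tau> < h x}" .
  qed
  finally show ?thesis .
qed


lemma meas_set:
  assumes [measurable]: "f \<in> borel_measurable M" and t: "t > 0" and \<tau>: "\<tau> > 0"
  shows "emeasure (restrict_space lborel {0<..<t}) {s \<in> space (restrict_space lborel {0<..<t}). ennreal \<tau> < rearrangement M f s}
     = min (ennreal t) (distrib_fun M f \<tau>)"
proof -
  let ?l = "distrib_fun M f \<tau>"
  have "{s \<in> space (restrict_space lborel {0<..<t}). ennreal \<tau> < rearrangement M f s} = {s \<in> {0<..<t}. ennreal s < ?l}"
    using rearr_iff[OF assms(1) _ \<tau>] by (auto simp: space_restrict_space)
  moreover have "emeasure (restrict_space lborel {0<..<t}) {s \<in> {0<..<t}. ennreal s < ?l} = emeasure lborel {s \<in> {0<..<t}. ennreal s < ?l}"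
    by (rule emeasure_restrict_space) auto
  moreover have "emeasure lborel {s \<in> {0<..<t}. ennreal s < ?l} = min (ennreal t) ?l"
  proof (cases "ennreal t \<le> ?l")
    case True
    have "ennreal s < ?l" if "0 < s" "s < t" for s
    proof -
      have "ennreal s < ennreal t" using that by (simp add: ennreal_less_iff)
      then show ?thesis using True by order
    qed
    then have "{s \<in> {0<..<t}. ennreal s < ?l} = {0<..<t}" by auto
    then show ?thesis using True t by (simp add: min_def)
  next
    case False
    then obtain L where L: "?l = ennreal L" "L \<ge> 0" "L < t"
      by (metis ennreal_cases ennreal_less_iff ennreal_less_top less_le_not_le not_le top.extremum_unique)
    then have "{s \<in> {0<..<t}. ennreal s < ?l} = {0<..<L}"
      by (auto simp: ennreal_less_iff)
    then show ?thesis using L by (simp add: min_def)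
  qed
  ultimately show ?thesis by simp
qed

lemma rearr_layer:
  assumes [measurable]: "f \<in> borel_measurable M" and t: "t > 0" and p: "p \<ge> 1"
  shows "(\<integral>\<^sup>+ s \<in> {0<..<t}. epowr (rearrangement M f s) p \<partial>lborel)
    = (\<integral>\<^sup>+\<tau>. ennreal (p * \<tau> powr (p-1)) * indicator {0<..} \<tau> * min (ennreal t) (distrib_fun M f \<tau>) \<partial>lborel)"
proof -
  let ?M = "restrict_space lborel {0<..<t}"
  have sf: "sigma_finite_measure ?M"
    by (rule sigma_finite_measure_restrict_space[OF sigma_finite_lborel]) auto
  have hm: "rearrangement M f \<in> borel_measurable borel"
    by (rule antimono_borel) (rule rearr_antimono)
  then have hm': "rearrangement M f \<in> borel_measurable ?M"
    by (intro measurable_restrict_space1) simp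
  have "(\<integral>\<^sup>+ s \<in> {0<..<t}. epowr (rearrangement M f s) p \<partial>lborel) = (\<integral>\<^sup>+ s. epowr (rearrangement M f s) p \<partial>?M)"
    by (rule nn_integral_restrict_space[symmetric]) auto
  also have "\<dots> = (\<integral>\<^sup>+\<tau>. ennreal (p * \<tau> powr (p-1)) * indicator {0<..} \<tau> * emeasure ?M {s\<in>space ?M. ennreal \<tau> < rearrangement M f s} \<partial>lborel)"
    by (rule layer_cake[OF sf p hm'])
  also have "\<dots> = (\<integral>\<^sup>+\<tau>. ennreal (p * \<tau> powr (p-1)) * indicator {0<..} \<tau> * min (ennreal t) (distrib_fun M f \<tau>) \<partial>lborel)"
    by (rule nn_integral_cong) (use meas_set[OF assms(1) t] in \<open>auto simp: indicator_def\<close>)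
  finally show ?thesis .
qed

lemma norm_layer:
  assumes sf: "sigma_finite_measure M" and [measurable]: "f \<in> borel_measurable M" and p: "p \<ge> 1"
  shows "(\<integral>\<^sup>+x. ennreal (\<bar>f x\<bar> powr p) \<partial>M)
    = (\<integral>\<^sup>+\<tau>. ennreal (p * \<tau> powr (p-1)) * indicator {0<..} \<tau> * distrib_fun M f \<tau> \<partial>lborel)"
proof -
  have "(\<integral>\<^sup>+x. ennreal (\<bar>f x\<bar> powr p) \<partial>M) = (\<integral>\<^sup>+x. epowr (ennreal \<bar>f x\<bar>) p \<partial>M)"
    by (simp add: epowr_def)
  also have "\<dots> = (\<integral>\<^sup>+\<tau>. ennreal (p * \<tau> powr (p-1)) * indicator {0<..} \<tau> * emeasure M {x\<in>space M. ennreal \<tau> < ennreal \<bar>f x\<bar>} \<partial>lborel)"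
    by (rule layer_cake[OF sf p]) simp
  also have "\<dots> = (\<integral>\<^sup>+\<tau>. ennreal (p * \<tau> powr (p-1)) * indicator {0<..} \<tau> * distrib_fun M f \<tau> \<partial>lborel)"
    by (rule nn_integral_cong) (auto simp: indicator_def distrib_fun_def ennreal_less_iff)
  finally show ?thesis .
qed

theorem mainTheorem3:
  fixes M :: "'a measure" and f g :: "'a \<Rightarrow> real" and p0 \<tau>0 :: real
  assumes "sigma_finite_measure M"
    and "p0 \<ge> 1"
    and "f \<in> borel_measurable M" and "g \<in> borel_measurable M"
    and "\<tau>0 > 0"
    and "\<And>\<tau>. 0 < \<tau> \<Longrightarrow> \<tau> < \<tau>0 \<Longrightarrow> distrib_fun M f \<tau> \<le> distrib_fun M g \<tau>"
    and "\<And>\<tau>. \<tau> > \<tau>0 \<Longrightarrow> distrib_fun M f \<tau> \<ge> distrib_fun M g \<tau>"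
    and "in_Lp M p0 f"
    and "Lp_norm M p0 f \<ge> Lp_norm M p0 g"
    and "t > 0"
  shows "(\<integral>\<^sup>+ s \<in> {0<..<t}. epowr (rearrangement M g s) p0 \<partial>lborel)
       \<le> (\<integral>\<^sup>+ s \<in> {0<..<t}. epowr (rearrangement M f s) p0 \<partial>lborel)"
proof -
  note fm[measurable] = assms(3) and gm[measurable] = assms(4)
  define W where "W \<tau> = ennreal (p0 * \<tau> powr (p0-1)) * indicator {0<..} \<tau>" for \<tau> :: real
  define If where "If = (\<integral>\<^sup>+x. ennreal (\<bar>f x\<bar> powr p0) \<partial>M)"
  define Ig where "Ig = (\<integral>\<^sup>+x. ennreal (\<bar>g x\<bar> powr p0) \<partial>M)"
  have p: "p0 \<ge> 1" by fact
  have If_fin: "If \<noteq> \<infinity>"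
    using assms(8) unfolding in_Lp_def If_def by auto
  have IgIf: "Ig \<le> If"
  proof -
    have le: "epowr Ig (1/p0) \<le> epowr If (1/p0)"
      using assms(9) unfolding Lp_norm_def If_def Ig_def .
    have Ig_fin: "Ig \<noteq> \<infinity>"
      using le If_fin by (auto simp: epowr_def top_unique)
    define a where "a = enn2real Ig"
    define b where "b = enn2real If"
    have ab: "a \<ge> 0" "b \<ge> 0" by (auto simp: a_def b_def)
    have "a powr (1/p0) \<le> b powr (1/p0)"
      using le If_fin Ig_fin by (simp add: epowr_def a_def b_def ennreal_le_iff)
    then have "(a powr (1/p0)) powr p0 \<le> (b powr (1/p0)) powr p0"
      using powr_mono2[of p0 "a powr (1/p0)" "b powr (1/p0)"] p by auto
    then have "a \<le> b" using p ab by (simp add: powr_powr)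
    moreover have "Ig = ennreal a" "If = ennreal b" using If_fin Ig_fin
      by (auto simp: a_def b_def less_top[symmetric])
    ultimately show ?thesis by (simp add: ennreal_leI)
  qed
  have Wm: "W \<in> borel_measurable borel" unfolding W_def by measurable
  have "(\<integral>\<^sup>+ s \<in> {0<..<t}. epowr (rearrangement M g s) p0 \<partial>lborel)
      = (\<integral>\<^sup>+\<tau>. W \<tau> * min (ennreal t) (distrib_fun M g \<tau>) \<partial>lborel)"
    unfolding W_def by (rule rearr_layer[OF gm assms(10) p])
  also have "\<dots> \<le> (\<integral>\<^sup>+\<tau>. W \<tau> * min (ennreal t) (distrib_fun M f \<tau>) \<partial>lborel)"
  proof (rule final_cmp[OF Wm dist_meas[OF fm] dist_meas[OF gm]])
    show "distrib_fun M f \<tau> \<le> distrib_fun M f \<sigma>" if "\<sigma> \<le> \<tau>" for \<sigma> \<tau>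
      using dist_antimono[OF fm that] .
    show "distrib_fun M f \<tau> \<le> distrib_fun M g \<tau>" if "0 < \<tau>" "\<tau> < \<tau>0" for \<tau>
      using assms(6) that .
    show "distrib_fun M g \<tau> \<le> distrib_fun M f \<tau>" if "\<tau> > \<tau>0" for \<tau>
      using assms(7) that .
    show "W \<tau> = 0" if "\<tau> \<le> 0" for \<tau> using that by (simp add: W_def)
    show "\<tau>0 > 0" by fact
    show "(\<integral>\<^sup>+\<tau>. W \<tau> * distrib_fun M g \<tau> \<partial>lborel) \<le> (\<integral>\<^sup>+\<tau>. W \<tau> * distrib_fun M f \<tau> \<partial>lborel)"
      using IgIf unfolding If_def Ig_def W_def
      by (simp add: norm_layer[OF assms(1) fm p] norm_layer[OF assms(1) gm p])
    show "(\<integral>\<^sup>+\<tau>. W \<tau> * distrib_fun M f \<tau> \<partial>lborel) < \<infinity>"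
      using If_fin unfolding If_def W_def
      by (simp add: norm_layer[OF assms(1) fm p] less_top)
  qed
  also have "\<dots> = (\<integral>\<^sup>+ s \<in> {0<..<t}. epowr (rearrangement M f s) p0 \<partial>lborel)"
    unfolding W_def by (rule rearr_layer[OF fm assms(10) p, symmetric])
  finally show ?thesis .
qed

end
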